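(* Let $\Delta$ and $\Gamma$ be finite simplicial graphs. If $\mathbb{G}(\Delta)$ and $\mathbb{G}(\Gamma)$ are commensurable, then $\mathbb{G}(\Gamma)$ is isomorphic to a subgroup of $\mathbb{G}(\Delta)$ and $\mathbb{G}(\Delta)$ is isomorphic to a subgroup of $\mathbb{G}(\Gamma)$.
   Context: $\mathbb{G}(\Gamma)$ is the pc group (right-angled Artin group) with generators $V(\Gamma)$ and relations $[u,v]=1$ for each edge of $\Gamma$. Two groups $G,G'$ are (abstractly) commensurable if there are finite-index subgroups $H\le G$, $H'\le G'$ with $H\cong H'$. *)

theory Defs
  imports "HOL-Algebra.Algebra"
begin

definition simplicial_graph :: "'v set \<Rightarrow> ('v \<Rightarrow> 'v \<Rightarrow> bool) \<Rightarrow> bool" where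
  "simplicial_graph V E \<longleftrightarrow> finite V \<and>
     (\<forall>u w. E u w \<longrightarrow> u \<in> V \<and> w \<in> V \<and> E w u \<and> u \<noteq> w)"

text \<open>Words in the generators and their inverses: a letter (v, True) is v,
  (v, False) is v inverse.\<close>
type_synonym 'v word = "('v \<times> bool) list"

inductive raag_step :: "('v \<Rightarrow> 'v \<Rightarrow> bool) \<Rightarrow> 'v word \<Rightarrow> 'v word \<Rightarrow> bool"
  for E where
  cancel: "raag_step E (xs @ [(v, b), (v, \<not> b)] @ ys) (xs @ ys)"
| commute: "E u w \<Longrightarrow> raag_step E (xs @ [(u, b), (w, c)] @ ys) (xs @ [(w, c), (u, b)] @ ys)"

definition raag_rel :: "'v set \<Rightarrow> ('v \<Rightarrow> 'v \<Rightarrow> bool) \<Rightarrow> ('v word \<times> 'v word) set" where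
  "raag_rel V E = {(x, y). x \<in> lists (V \<times> UNIV) \<and> y \<in> lists (V \<times> UNIV) \<and>
      (x, y) \<in> ({(a, b). raag_step E a b} \<union> {(a, b). raag_step E b a})\<^sup>*}"

definition raag :: "'v set \<Rightarrow> ('v \<Rightarrow> 'v \<Rightarrow> bool) \<Rightarrow> 'v word set monoid" where
  "raag V E = \<lparr> carrier = lists (V \<times> UNIV) // raag_rel V E,
      monoid.mult = (\<lambda>A B. \<Union>a\<in>A. \<Union>b\<in>B. raag_rel V E `` {a @ b}),
      monoid.one = raag_rel V E `` {[]} \<rparr>"

definition commensurable :: "('a, 'c) monoid_scheme \<Rightarrow> ('b, 'd) monoid_scheme \<Rightarrow> bool" where
  "commensurable G G' \<longleftrightarrow> (\<exists>H H'. subgroup H G \<and> finite (rcosets\<^bsub>G\<^esub> H) \<and>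
      subgroup H' G' \<and> finite (rcosets\<^bsub>G'\<^esub> H') \<and>
      G\<lparr>carrier := H\<rparr> \<cong> G'\<lparr>carrier := H'\<rparr>)"

end

theory Submission
  imports Defs
begin


definition linv :: "'v \<times> bool \<Rightarrow> 'v \<times> bool" where "linv x = (fst x, \<not> snd x)"

lemma linv_fst[simp]: "fst (linv x) = fst x" by (simp add: linv_def)
lemma linv_linv[simp]: "linv (linv x) = x" by (simp add: linv_def)
lemma linv_neq[simp]: "linv x \<noteq> x" "x \<noteq> linv x" by (cases x, simp add: linv_def)+

inductive swp :: "('v \<Rightarrow> 'v \<Rightarrow> bool) \<Rightarrow> ('v\<times>bool) list \<Rightarrow> ('v\<times>bool) list \<Rightarrow> bool" for E where
  "E (fst x) (fst y) \<Longrightarrow> swp E (xs @ [x, y] @ ys) (xs @ [y, x] @ ys)"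

abbreviation eqv where "eqv E \<equiv> (swp E)\<^sup>*\<^sup>*"

definition dv where
  "dv E y w = (case dropWhile (\<lambda>z. E (fst z) (fst y)) w of [] \<Rightarrow> False | z # _ \<Rightarrow> z = y)"

definition act where
  "act E x w = (case dropWhile (\<lambda>z. E (fst z) (fst x)) w of [] \<Rightarrow> x # w
      | z # r \<Rightarrow> if z = linv x then takeWhile (\<lambda>z. E (fst z) (fst x)) w @ r else x # w)"

locale rg = fixes E :: "'v \<Rightarrow> 'v \<Rightarrow> bool"
  assumes sym: "E u w \<Longrightarrow> E w u" and irr: "\<not> E u u"
begin

lemma swp_sym: "swp E a b \<Longrightarrow> swp E b a"
  by (induct rule: swp.induct) (metis swp.intros sym)

lemma eqv_sym: "eqv E a b \<Longrightarrow> eqv E b a"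
proof (induct rule: rtranclp_induct)
  case base then show ?case by simp
next
  case (step y z) then show ?case
    by (meson converse_rtranclp_into_rtranclp swp_sym)
qed

lemma swp_app: "swp E a b \<Longrightarrow> swp E (c @ a @ d) (c @ b @ d)"
proof (induct rule: swp.induct)
  case (1 x y xs ys)
  have "swp E ((c @ xs) @ [x, y] @ (ys @ d)) ((c @ xs) @ [y, x] @ (ys @ d))"
    using 1 by (rule swp.intros)
  then show ?case by simp
qed

lemma eqv_app: "eqv E a b \<Longrightarrow> eqv E (c @ a @ d) (c @ b @ d)"
proof (induct rule: rtranclp_induct)
  case base then show ?case by simp
next
  case (step y z) then show ?case
    by (meson rtranclp.rtrancl_into_rtrancl swp_app)
qed

lemma eqv_cons: "eqv E a b \<Longrightarrow> eqv E (x # a) (x # b)"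
  using eqv_app[of a b "[x]" "[]"] by simp

lemma eqv_appl: "eqv E a b \<Longrightarrow> eqv E (c @ a) (c @ b)"
  using eqv_app[of a b c "[]"] by simp

lemma eqv_appr: "eqv E a b \<Longrightarrow> eqv E (a @ d) (b @ d)"
  using eqv_app[of a b "[]" d] by simp

lemma swp_length: "swp E a b \<Longrightarrow> length a = length b"
  by (induct rule: swp.induct) simp

lemma eqv_length: "eqv E a b \<Longrightarrow> length a = length b"
  by (induct rule: rtranclp_induct) (auto dest: swp_length)

lemma eqv_Nil: "eqv E [] b \<Longrightarrow> b = []"
  using eqv_length by fastforce

lemma move: "\<forall>z\<in>set p. E (fst z) (fst x) \<Longrightarrow> eqv E (p @ x # q) (x # p @ q)"
proof (induct p)
  case Nil then show ?case by simp
next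
  case (Cons z p)
  have 1: "eqv E (z # p @ x # q) (z # x # p @ q)" using Cons by (simp add: eqv_cons)
  have "swp E ([] @ [z, x] @ (p @ q)) ([] @ [x, z] @ (p @ q))" using Cons by (intro swp.intros) simp
  then have "eqv E (z # x # p @ q) (x # z # p @ q)" by simp
  with 1 show ?case by simp
qed

lemma swp_remove1: "swp E a b \<Longrightarrow> eqv E (remove1 x a) (remove1 x b)"
proof (induct rule: swp.induct)
  case (1 u w xs ys)
  have uw: "u \<noteq> w" using 1 irr by auto
  show ?case
  proof (cases "x \<in> set xs")
    case True
    then have "remove1 x (xs @ [u, w] @ ys) = remove1 x xs @ [u, w] @ ys"
      "remove1 x (xs @ [w, u] @ ys) = remove1 x xs @ [w, u] @ ys" by (simp_all add: remove1_append)
    then show ?thesis using 1 by (metis r_into_rtranclp swp.intros)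
  next
    case False
    show ?thesis
    proof (cases "x = u \<or> x = w")
      case True then show ?thesis using False uw by (auto simp: remove1_append)
    next
      case F2: False
      then have "remove1 x (xs @ [u, w] @ ys) = xs @ [u, w] @ remove1 x ys"
        "remove1 x (xs @ [w, u] @ ys) = xs @ [w, u] @ remove1 x ys" using False by (auto simp: remove1_append)
      then show ?thesis using 1 by (metis r_into_rtranclp swp.intros)
    qed
  qed
qed

lemma eqv_remove1: "eqv E a b \<Longrightarrow> eqv E (remove1 x a) (remove1 x b)"
  by (induct rule: rtranclp_induct) (auto intro: rtranclp_trans swp_remove1)

lemma eqv_cancel: "eqv E (x # a) (x # b) \<Longrightarrow> eqv E a b"
  using eqv_remove1[of "x # a" "x # b" x] by simp

lemma swp_dv: "swp E a b \<Longrightarrow> dv E y a \<Longrightarrow> dv E y b"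
proof (induct rule: swp.induct)
  case (1 u w xs ys)
  let ?Q = "\<lambda>z. E (fst z) (fst y)"
  show ?case
  proof (cases "\<forall>z\<in>set xs. ?Q z")
    case False
    then have e: "dropWhile ?Q (xs @ l) = dropWhile ?Q xs @ l" for l
      unfolding dropWhile_append using False by auto
    have "dropWhile ?Q xs \<noteq> []" using False by (simp add: dropWhile_eq_Nil_conv)
    then obtain z zs where z: "dropWhile ?Q xs = z # zs" by (cases "dropWhile ?Q xs") auto
    show ?thesis using 1(2) unfolding dv_def e z by simp
  next
    case True
    then have d: "dropWhile ?Q (xs @ l) = dropWhile ?Q l" for l
      by (simp add: dropWhile_append2)
    show ?thesis
    proof (cases "?Q u \<and> ?Q w \<or> (\<not> ?Q u \<and> \<not> ?Q w)")
      case True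
      then show ?thesis
      proof
        assume "?Q u \<and> ?Q w" then show ?thesis using 1 d unfolding dv_def by simp
      next
        assume a: "\<not> ?Q u \<and> \<not> ?Q w"
        have "u \<noteq> y" "w \<noteq> y" using 1 a sym by auto
        then show ?thesis using 1 d a unfolding dv_def by simp
      qed
    next
      case False
      then show ?thesis using 1 d unfolding dv_def by auto
    qed
  qed
qed

lemma eqv_dv: "eqv E a b \<Longrightarrow> dv E y a \<Longrightarrow> dv E y b"
  by (induct rule: rtranclp_induct) (auto intro: swp_dv)

lemma dv_cons[simp]: "dv E y (y # w)"
  using irr by (simp add: dv_def)

lemma dv_eqv: "eqv E w (y # r) \<Longrightarrow> dv E y w"
  using eqv_dv[OF eqv_sym] by (metis dv_cons)

lemma dv_move:
  assumes "dv E y w"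
  shows "\<exists>r. dropWhile (\<lambda>z. E (fst z) (fst y)) w = y # r \<and>
     eqv E w (y # takeWhile (\<lambda>z. E (fst z) (fst y)) w @ r)"
proof -
  let ?Q = "\<lambda>z. E (fst z) (fst y)"
  obtain r where r: "dropWhile ?Q w = y # r" using assms unfolding dv_def
    by (auto split: list.splits)
  have "w = takeWhile ?Q w @ y # r" using r by (metis takeWhile_dropWhile_id)
  moreover have "\<forall>z\<in>set (takeWhile ?Q w). ?Q z" by (meson set_takeWhileD)
  ultimately show ?thesis using r move by metis
qed

end


context rg begin

lemma Q_linv: "(\<lambda>z. E (fst z) (fst (linv x))) = (\<lambda>z. E (fst z) (fst x))" by simp

lemma act_nodv: assumes "\<not> dv E (linv x) w" shows "act E x w = x # w"
proof (cases "dropWhile (\<lambda>z. E (fst z) (fst x)) w")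
  case Nil show ?thesis unfolding act_def Nil list.case by (rule refl)
next
  case (Cons z r)
  then have "z \<noteq> linv x" using assms unfolding dv_def Q_linv by simp
  then show ?thesis using Cons unfolding act_def by simp
qed

lemma act_dv: "dv E (linv x) w \<Longrightarrow> eqv E w (linv x # act E x w)"
proof -
  assume "dv E (linv x) w"
  from dv_move[OF this] obtain r where
    r: "dropWhile (\<lambda>z. E (fst z) (fst x)) w = linv x # r"
       "eqv E w (linv x # takeWhile (\<lambda>z. E (fst z) (fst x)) w @ r)" by auto
  then have "act E x w = takeWhile (\<lambda>z. E (fst z) (fst x)) w @ r" unfolding act_def by simp
  with r show ?thesis by simp
qed

lemma act_eqv_cancel: "eqv E w (linv x # r) \<Longrightarrow> eqv E (act E x w) r"
proof -
  assume a: "eqv E w (linv x # r)"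
  then have "dv E (linv x) w" by (rule dv_eqv)
  then have "eqv E w (linv x # act E x w)" by (rule act_dv)
  then have "eqv E (linv x # act E x w) (linv x # r)" using a eqv_sym by (meson rtranclp_trans)
  then show ?thesis by (rule eqv_cancel)
qed

lemma act_linv_cons[simp]: "act E x (linv x # r) = r"
  using irr unfolding act_def by simp

lemma act_respects: "eqv E a b \<Longrightarrow> eqv E (act E x a) (act E x b)"
proof (cases "dv E (linv x) a")
  case True
  assume ab: "eqv E a b"
  have "eqv E a (linv x # act E x a)" using True by (rule act_dv)
  then have "eqv E b (linv x # act E x a)" using ab eqv_sym by (meson rtranclp_trans)
  then have "eqv E (act E x b) (act E x a)" by (rule act_eqv_cancel)
  then show ?thesis by (rule eqv_sym)
next
  case False
  assume ab: "eqv E a b"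
  then have "\<not> dv E (linv x) b" using False eqv_dv eqv_sym by blast
  then show ?thesis using False ab by (simp add: act_nodv eqv_cons)
qed

lemma foldr_act_respects: "eqv E a b \<Longrightarrow> eqv E (foldr (act E) xs a) (foldr (act E) xs b)"
  by (induct xs) (auto intro: act_respects)

lemma swap2: "E (fst x) (fst y) \<Longrightarrow> eqv E (x # y # r) (y # x # r)"
proof -
  assume "E (fst x) (fst y)"
  then have "swp E ([] @ [x, y] @ r) ([] @ [y, x] @ r)" by (rule swp.intros)
  then show ?thesis by simp
qed

lemma dv_cons_other: "E (fst x) (fst y) \<Longrightarrow> dv E y (x # w) = dv E y w"
  unfolding dv_def by simp

lemma act_comm_half:
  assumes xy: "E (fst x) (fst y)" and dy: "dv E (linv y) w" and nx: "\<not> dv E (linv x) w"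
  shows "eqv E (act E x (act E y w)) (act E y (act E x w))"
proof -
  let ?w' = "act E y w"
  have w: "eqv E w (linv y # ?w')" using dy by (rule act_dv)
  have "\<not> dv E (linv x) ?w'"
  proof
    assume "dv E (linv x) ?w'"
    from act_dv[OF this] have "eqv E ?w' (linv x # act E x ?w')" .
    then have "eqv E w (linv y # linv x # act E x ?w')" using w
      by (meson eqv_cons rtranclp_trans)
    moreover have "eqv E (linv y # linv x # act E x ?w') (linv x # linv y # act E x ?w')"
      using xy sym by (intro swap2) simp
    ultimately have "dv E (linv x) w" by (meson dv_eqv rtranclp_trans)
    with nx show False by simp
  qed
  then have l: "act E x ?w' = x # ?w'" by (rule act_nodv)
  have r0: "act E x w = x # w" using nx by (rule act_nodv)
  have "eqv E (x # w) (x # linv y # ?w')" using w by (rule eqv_cons)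
  moreover have "eqv E (x # linv y # ?w') (linv y # x # ?w')" using xy by (intro swap2) simp
  ultimately have "eqv E (x # w) (linv y # x # ?w')" by (rule rtranclp_trans)
  then have "eqv E (act E y (x # w)) (x # ?w')" by (rule act_eqv_cancel)
  then show ?thesis using l r0 eqv_sym by simp
qed

lemma act_comm:
  assumes xy: "E (fst x) (fst y)"
  shows "eqv E (act E x (act E y w)) (act E y (act E x w))"
proof (cases "dv E (linv x) w"; cases "dv E (linv y) w")
  assume a: "dv E (linv x) w" "dv E (linv y) w"
  let ?a = "act E x w" and ?b = "act E y w"
  have wa: "eqv E w (linv x # ?a)" using a(1) by (rule act_dv)
  have wb: "eqv E w (linv y # ?b)" using a(2) by (rule act_dv)
  have "dv E (linv y) (linv x # ?a)" using eqv_dv[OF wa a(2)] .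
  then have "dv E (linv y) ?a" using xy by (simp add: dv_cons_other)
  then have ac: "eqv E ?a (linv y # act E y ?a)" by (rule act_dv)
  let ?c = "act E y ?a"
  have "eqv E w (linv x # linv y # ?c)" using wa ac by (meson eqv_cons rtranclp_trans)
  moreover have "eqv E (linv x # linv y # ?c) (linv y # linv x # ?c)" using xy by (intro swap2) simp
  ultimately have "eqv E w (linv y # linv x # ?c)" by (rule rtranclp_trans)
  then have "eqv E (linv y # ?b) (linv y # linv x # ?c)" using wb eqv_sym by (meson rtranclp_trans)
  then have "eqv E ?b (linv x # ?c)" by (rule eqv_cancel)
  then have "eqv E (act E x ?b) ?c" by (rule act_eqv_cancel)
  then show ?thesis by simp
next
  assume "dv E (linv x) w" "\<not> dv E (linv y) w"
  then show ?thesis using act_comm_half[of y x w] xy sym eqv_sym by blast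
next
  assume "\<not> dv E (linv x) w" "dv E (linv y) w"
  then show ?thesis using act_comm_half[of x y w] xy by blast
next
  assume a: "\<not> dv E (linv x) w" "\<not> dv E (linv y) w"
  have "\<not> dv E (linv x) (y # w)" using a xy sym by (simp add: dv_cons_other)
  moreover have "\<not> dv E (linv y) (x # w)" using a xy sym by (simp add: dv_cons_other)
  ultimately show ?thesis using a xy by (simp add: act_nodv swap2)
qed

definition red where "red w = (\<not> (\<exists>a y b. eqv E w (a @ [y, linv y] @ b)))"

lemma red_Nil: "red []" unfolding red_def using eqv_Nil by fastforce

lemma red_cons_dv: assumes "red w" "eqv E w (y # r)" shows "red r"
  unfolding red_def
proof
  assume "\<exists>a z b. eqv E r (a @ [z, linv z] @ b)"
  then obtain a z b where "eqv E r (a @ [z, linv z] @ b)" by blast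
  then have "eqv E (y # r) ((y # a) @ [z, linv z] @ b)" using eqv_cons by fastforce
  then have "eqv E w ((y # a) @ [z, linv z] @ b)" using rtranclp_trans[OF assms(2)] by blast
  then show False using assms(1) unfolding red_def by blast
qed

lemma act_red:
  assumes rw: "red w" shows "red (act E x w)"
proof (cases "dv E (linv x) w")
  case True
  then have "eqv E w (linv x # act E x w)" by (rule act_dv)
  then show ?thesis using red_cons_dv[OF rw] by blast
next
  case False
  then have ax: "act E x w = x # w" by (rule act_nodv)
  let ?Q = "\<lambda>z. E (fst z) (fst x)"
  show ?thesis unfolding ax red_def
  proof
    assume "\<exists>a y b. eqv E (x # w) (a @ [y, linv y] @ b)"
    then obtain a y b where t: "eqv E (x # w) (a @ [y, linv y] @ b)" by blast
    have contra: "False" if "eqv E (x # w) (x # a' @ [y', linv y'] @ b')" for a' y' b'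
    proof -
      have "eqv E w (a' @ [y', linv y'] @ b')" using that by (rule eqv_cancel)
      then show False using rw unfolding red_def by blast
    qed
    have dvt: "dv E x (a @ [y, linv y] @ b)" using eqv_dv[OF t dv_cons] .
    show False
    proof (cases "\<forall>z\<in>set a. ?Q z")
      case False
      then have "\<exists>z\<in>set a. \<not> ?Q z" by blast
      from split_list_first_propE[OF this] obtain a1 z a2 where a: "a = a1 @ z # a2" "\<not> ?Q z" "\<forall>u\<in>set a1. \<not> \<not> ?Q u" .
      have a1: "\<forall>u\<in>set a1. ?Q u" using a(3) by blast
      have "dropWhile ?Q (a @ [y, linv y] @ b) = z # a2 @ [y, linv y] @ b"
        using a a1 by (simp add: dropWhile_append)
      then have "z = x" using dvt unfolding dv_def by simp
      then have 1: "eqv E (a @ [y, linv y] @ b) (x # a1 @ a2 @ [y, linv y] @ b)"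
        using move[OF a1, of "a2 @ [y, linv y] @ b"] a(1) by simp
      have "eqv E (x # w) (x # (a1 @ a2) @ [y, linv y] @ b)" using rtranclp_trans[OF t 1] by simp
      then show False by (rule contra)
    next
      case True
      note aQ = True
      show False
      proof (cases "?Q y")
        case True
        then have yQ: "?Q (linv y)" by simp
        have "dropWhile ?Q (a @ [y, linv y] @ b) = dropWhile ?Q b"
          using aQ True yQ by (simp add: dropWhile_append)
        then have dvb: "dv E x b" using dvt unfolding dv_def by simp
        from dv_move[OF this] obtain r where
          "eqv E b (x # takeWhile ?Q b @ r)" by auto
        then have 1: "eqv E (a @ [y, linv y] @ b) ((a @ [y, linv y]) @ x # takeWhile ?Q b @ r)"
          using eqv_appl[of b "x # takeWhile ?Q b @ r" "a @ [y, linv y]"] by simp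
        have "\<forall>u\<in>set (a @ [y, linv y]). ?Q u" using aQ True yQ by auto
        from move[OF this, of "takeWhile ?Q b @ r"] have 2:
          "eqv E ((a @ [y, linv y]) @ x # takeWhile ?Q b @ r) (x # a @ [y, linv y] @ (takeWhile ?Q b @ r))"
          by simp
        have "eqv E (x # w) (x # a @ [y, linv y] @ (takeWhile ?Q b @ r))"
          using rtranclp_trans[OF rtranclp_trans[OF t 1] 2] .
        then show False by (rule contra)
      next
        case False
        have "dropWhile ?Q (a @ [y, linv y] @ b) = y # linv y # b"
          using aQ False by (simp add: dropWhile_append)
        then have yx: "y = x" using dvt unfolding dv_def by simp
        have 1: "eqv E (a @ [y, linv y] @ b) (x # a @ linv x # b)" using move[OF aQ, of "linv x # b"] yx by simp
        have "\<forall>z\<in>set a. E (fst z) (fst (linv x))" using aQ by simp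
        from move[OF this, of b] have "eqv E (a @ linv x # b) (linv x # a @ b)" .
        then have 2: "eqv E (x # a @ linv x # b) (x # linv x # a @ b)" by (rule eqv_cons)
        have "eqv E (x # w) (x # linv x # a @ b)" using rtranclp_trans[OF rtranclp_trans[OF t 1] 2] .
        then have "eqv E w (linv x # a @ b)" by (rule eqv_cancel)
        then have "dv E (linv x) w" by (rule dv_eqv)
        with \<open>\<not> dv E (linv x) w\<close> show False by simp
      qed
    qed
  qed
qed

lemma act_inv:
  assumes rw: "red w" shows "eqv E (act E x (act E (linv x) w)) w"
proof (cases "dv E x w")
  case True
  then have "dv E (linv (linv x)) w" by simp
  then have w: "eqv E w (x # act E (linv x) w)" using act_dv by fastforce
  let ?w' = "act E (linv x) w"
  have "\<not> dv E (linv x) ?w'"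
  proof
    assume "dv E (linv x) ?w'"
    then have "eqv E ?w' (linv x # act E x ?w')" by (rule act_dv)
    then have "eqv E (x # ?w') (x # linv x # act E x ?w')" by (rule eqv_cons)
    then have "eqv E w ([] @ [x, linv x] @ act E x ?w')" using rtranclp_trans[OF w] by simp
    then show False using rw unfolding red_def by blast
  qed
  then have "act E x ?w' = x # ?w'" by (rule act_nodv)
  then show ?thesis using eqv_sym[OF w] by simp
next
  case False
  then have "\<not> dv E (linv (linv x)) w" by simp
  then have "act E (linv x) w = linv x # w" by (rule act_nodv)
  then show ?thesis by simp
qed

definition eval where "eval w = foldr (act E) w []"

lemma red_eval: "red (eval w)"
  unfolding eval_def by (induct w) (auto simp: red_Nil act_red)

lemma eval_step: "raag_step E a b \<Longrightarrow> eqv E (eval a) (eval b)"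
proof (induct rule: raag_step.induct)
  case (cancel xs v b ys)
  have "(v, \<not> b) = linv (v, b)" by (simp add: linv_def)
  then have "eqv E (act E (v, b) (act E (v, \<not> b) (eval ys))) (eval ys)"
    using act_inv red_eval by simp
  then show ?case unfolding eval_def by (simp add: foldr_act_respects)
next
  case (commute u w xs b c ys)
  have "eqv E (act E (u, b) (act E (w, c) (eval ys))) (act E (w, c) (act E (u, b) (eval ys)))"
    using act_comm commute by simp
  then show ?case unfolding eval_def by (simp add: foldr_act_respects)
qed

end


definition phi :: "nat \<Rightarrow> ('v \<times> bool) list \<Rightarrow> ('v \<times> bool) list" where
  "phi N w = concat (map (\<lambda>z. replicate N z) w)"

lemma phi_simps[simp]: "phi N [] = []" "phi N (z # w) = replicate N z @ phi N w"
  "phi N (a @ b) = phi N a @ phi N b"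
  by (simp_all add: phi_def)

lemma phi_length: "length (phi N w) = N * length w"
  by (induct w) auto

context rg begin

lemma phi_dropWhile:
  assumes N: "0 < N"
  shows "dropWhile (\<lambda>z. E (fst z) (fst x)) (phi N r) = phi N (dropWhile (\<lambda>z. E (fst z) (fst x)) r)"
proof (induct r)
  case Nil then show ?case by simp
next
  case (Cons z r)
  show ?case
  proof (cases "E (fst z) (fst x)")
    case True
    then show ?thesis using Cons by (simp add: dropWhile_append)
  next
    case False
    have "z \<in> set (replicate N z)" using N by simp
    then show ?thesis using False by (simp add: dropWhile_append)
  qed
qed

lemma dv_phi:
  assumes N: "0 < N"
  shows "dv E y (phi N r) = dv E y r"
proof (cases "dropWhile (\<lambda>z. E (fst z) (fst y)) r")
  case Nil
  show ?thesis unfolding dv_def phi_dropWhile[OF N] Nil by simp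
next
  case (Cons z rs)
  obtain k where "N = Suc k" using N by (cases N) auto
  then show ?thesis unfolding dv_def phi_dropWhile[OF N] Cons by simp
qed

lemma blockswap: "\<forall>z\<in>set a. \<forall>u\<in>set b. E (fst z) (fst u) \<Longrightarrow> eqv E (a @ b) (b @ a)"
proof (induct a)
  case Nil then show ?case by simp
next
  case (Cons z a)
  then have 1: "eqv E (z # a @ b) (z # b @ a)" by (simp add: eqv_cons)
  have "\<forall>u\<in>set b. E (fst u) (fst z)" using Cons(2) sym by simp
  from move[OF this, of a] have "eqv E (b @ z # a) (z # b @ a)" .
  then have "eqv E (z # b @ a) (b @ z # a)" by (rule eqv_sym)
  with 1 show ?case by simp
qed

lemma phi_swp: "swp E a b \<Longrightarrow> eqv E (phi N a) (phi N b)"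
proof (induct rule: swp.induct)
  case (1 x y xs ys)
  have "eqv E (replicate N x @ replicate N y) (replicate N y @ replicate N x)"
    using 1 by (intro blockswap) simp
  then have "eqv E (phi N xs @ (replicate N x @ replicate N y) @ phi N ys)
     (phi N xs @ (replicate N y @ replicate N x) @ phi N ys)" by (rule eqv_app)
  then show ?case by simp
qed

lemma phi_eqv: "eqv E a b \<Longrightarrow> eqv E (phi N a) (phi N b)"
  by (induct rule: rtranclp_induct) (auto intro: rtranclp_trans phi_swp)

lemma foldr_rep_cancel:
  "foldr (act E) (replicate n x) (replicate (n + m) (linv x) @ s) = replicate m (linv x) @ s"
proof (induct n arbitrary: m)
  case 0 then show ?case by simp
next
  case (Suc n)
  have "foldr (act E) (replicate (Suc n) x) (replicate (Suc n + m) (linv x) @ s)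
     = act E x (foldr (act E) (replicate n x) (replicate (n + Suc m) (linv x) @ s))"
    by (simp del: foldr_replicate)
  also have "\<dots> = replicate m (linv x) @ s" using Suc[of "Suc m"] by (simp del: foldr_replicate)
  finally show ?case .
qed

lemma foldr_rep_nodv:
  assumes "\<not> dv E (linv x) t"
  shows "foldr (act E) (replicate n x) t = replicate n x @ t"
proof (induct n)
  case 0 then show ?case by simp
next
  case (Suc n)
  have "\<not> dv E (linv x) (replicate n x @ t)"
  proof (cases n)
    case 0 then show ?thesis using assms by simp
  next
    case (Suc k)
    have "\<not> E (fst x) (fst x)" using irr by simp
    then show ?thesis unfolding dv_def Suc by simp
  qed
  then show ?case using Suc by (simp del: foldr_replicate add: act_nodv)
qed

lemma key:
  assumes N: "0 < N"
  shows "eqv E (foldr (act E) (replicate N x) (phi N r)) (phi N (act E x r))"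
proof (cases "dv E (linv x) r")
  case True
  have r: "eqv E r (linv x # act E x r)" using True by (rule act_dv)
  have "eqv E (phi N r) (replicate N (linv x) @ phi N (act E x r))"
    using phi_eqv[OF r, of N] by simp
  then have "eqv E (foldr (act E) (replicate N x) (phi N r))
     (foldr (act E) (replicate N x) (replicate (N + 0) (linv x) @ phi N (act E x r)))"
    by (simp del: foldr_replicate add: foldr_act_respects)
  then show ?thesis by (simp only: foldr_rep_cancel) simp
next
  case False
  then have "\<not> dv E (linv x) (phi N r)" using dv_phi[OF N] by simp
  then have "foldr (act E) (replicate N x) (phi N r) = replicate N x @ phi N r"
    by (rule foldr_rep_nodv)
  then show ?thesis using False by (simp del: foldr_replicate add: act_nodv)
qed

lemma eval_phi:
  assumes N: "0 < N"
  shows "eqv E (eval (phi N w)) (phi N (eval w))"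
proof (induct w)
  case Nil then show ?case by (simp add: eval_def)
next
  case (Cons x w)
  have "eval (phi N (x # w)) = foldr (act E) (replicate N x) (eval (phi N w))"
    by (simp add: eval_def)
  moreover have "eqv E (foldr (act E) (replicate N x) (eval (phi N w)))
       (foldr (act E) (replicate N x) (phi N (eval w)))"
    using Cons by (rule foldr_act_respects)
  moreover have "eqv E (foldr (act E) (replicate N x) (phi N (eval w))) (phi N (eval (x # w)))"
    using key[OF N] by (simp add: eval_def)
  ultimately show ?case by (metis rtranclp_trans)
qed

end


locale sg = fixes V :: "'v set" and E :: "'v \<Rightarrow> 'v \<Rightarrow> bool"
  assumes sg: "simplicial_graph V E"
begin

sublocale rg E
  using sg unfolding simplicial_graph_def by unfold_locales auto

abbreviation "L \<equiv> lists (V \<times> (UNIV :: bool set))"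
abbreviation "R \<equiv> raag_rel V E"
abbreviation "S \<equiv> {(a, b). raag_step E a b} \<union> {(a, b). raag_step E b a}"

lemma R_def2: "(a, b) \<in> R \<longleftrightarrow> a \<in> L \<and> b \<in> L \<and> (a, b) \<in> S\<^sup>*"
  unfolding raag_rel_def by simp

lemma S_sym: "(a, b) \<in> S\<^sup>* \<Longrightarrow> (b, a) \<in> S\<^sup>*"
proof -
  have "sym S" unfolding sym_def by blast
  then show "(a, b) \<in> S\<^sup>* \<Longrightarrow> (b, a) \<in> S\<^sup>*" by (meson sym_rtrancl symD)
qed

lemma equivR: "equiv L R"
  unfolding equiv_def refl_on_def sym_def trans_def
  by (auto simp: R_def2 intro: S_sym rtrancl_trans)

lemma R_sym: "(a, b) \<in> R \<Longrightarrow> (b, a) \<in> R" using equivR by (meson equiv_def symD)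
lemma R_trans: "(a, b) \<in> R \<Longrightarrow> (b, c) \<in> R \<Longrightarrow> (a, c) \<in> R" using equivR by (meson equiv_def transD)
lemma R_refl: "a \<in> L \<Longrightarrow> (a, a) \<in> R" by (simp add: R_def2)
lemma R_L: "(a, b) \<in> R \<Longrightarrow> a \<in> L \<and> b \<in> L" by (simp add: R_def2)

lemma step_cong: "raag_step E a b \<Longrightarrow> raag_step E (c @ a @ d) (c @ b @ d)"
proof (induct rule: raag_step.induct)
  case (cancel xs v b ys)
  show ?case using raag_step.cancel[where xs="c @ xs" and ys="ys @ d"] by simp
next
  case (commute u w xs b c' ys)
  show ?case using raag_step.commute[where xs="c @ xs" and ys="ys @ d"] commute by simp
qed

lemma S_cong: "(a, b) \<in> S\<^sup>* \<Longrightarrow> (c @ a @ d, c @ b @ d) \<in> S\<^sup>*"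
proof (induct rule: rtrancl_induct)
  case base then show ?case by simp
next
  case (step y z)
  then have "(c @ y @ d, c @ z @ d) \<in> S" using step_cong by blast
  with step show ?case by (meson rtrancl.rtrancl_into_rtrancl)
qed

lemma R_cong: "(a, b) \<in> R \<Longrightarrow> c \<in> L \<Longrightarrow> d \<in> L \<Longrightarrow> (c @ a @ d, c @ b @ d) \<in> R"
  by (simp add: R_def2 S_cong)

lemma R_app: "(a, b) \<in> R \<Longrightarrow> (c, d) \<in> R \<Longrightarrow> (a @ c, b @ d) \<in> R"
proof -
  assume ab: "(a, b) \<in> R" and cd: "(c, d) \<in> R"
  have "(a @ c, b @ c) \<in> R" using R_cong[OF ab, of "[]" c] cd by (simp add: R_def2)
  moreover have "(b @ c, b @ d) \<in> R" using R_cong[OF cd, of b "[]"] ab by (simp add: R_def2)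
  ultimately show ?thesis by (rule R_trans)
qed

lemma R_step: "a \<in> L \<Longrightarrow> b \<in> L \<Longrightarrow> raag_step E a b \<Longrightarrow> (a, b) \<in> R"
  by (auto simp: R_def2)

lemma swp_set: "swp E a b \<Longrightarrow> set a = set b"
  by (induct rule: swp.induct) auto

lemma eqv_set: "eqv E a b \<Longrightarrow> set a = set b"
  by (induct rule: rtranclp_induct) (auto dest: swp_set)

lemma swp_step: "swp E a b \<Longrightarrow> raag_step E a b"
  by (induct rule: swp.induct) (metis prod.collapse raag_step.commute)

lemma eqv_R: "eqv E a b \<Longrightarrow> a \<in> L \<Longrightarrow> (a, b) \<in> R"
proof (induct rule: rtranclp_induct)
  case base then show ?case by (rule R_refl)
next
  case (step y z)
  have "y \<in> L" using step R_L by blast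
  moreover have "z \<in> L" using calculation swp_set[OF step(2)] by (simp add: lists_eq_set)
  ultimately have "(y, z) \<in> R" using R_step swp_step step(2) by blast
  with step show ?case using R_trans by blast
qed

lemma S_eval: "(a, b) \<in> S\<^sup>* \<Longrightarrow> eqv E (eval a) (eval b)"
proof (induct rule: rtrancl_induct)
  case base then show ?case by simp
next
  case (step y z)
  then have "eqv E (eval y) (eval z)" using eval_step eqv_sym by blast
  with step show ?case by (meson rtranclp_trans)
qed

lemma R_eval: "(a, b) \<in> R \<Longrightarrow> eqv E (eval a) (eval b)"
  by (simp add: R_def2 S_eval)

lemma act_R:
  assumes x: "x \<in> V \<times> UNIV" and w: "w \<in> L"
  shows "(x # w, act E x w) \<in> R"
proof (cases "dv E (linv x) w")
  case True
  then have e: "eqv E w (linv x # act E x w)" by (rule act_dv)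
  then have s: "set w = set (linv x # act E x w)" by (rule eqv_set)
  have lx: "linv x \<in> V \<times> UNIV" using x by (cases x) (simp add: linv_def)
  have aL: "act E x w \<in> L" using w s by (simp add: lists_eq_set)
  have 1: "(x # w, x # linv x # act E x w) \<in> R"
    using eqv_R[OF eqv_cons[OF e]] x w by simp
  obtain v b where xv: "x = (v, b)" by (cases x)
  have "raag_step E ([] @ [(v, b), (v, \<not> b)] @ act E x w) ([] @ act E x w)" by (rule raag_step.cancel)
  then have "raag_step E (x # linv x # act E x w) (act E x w)" using xv by (simp add: linv_def)
  then have "(x # linv x # act E x w, act E x w) \<in> R" using R_step x lx aL by simp
  with 1 show ?thesis by (rule R_trans)
next
  case False
  then show ?thesis using x w by (simp add: act_nodv R_refl)
qed

lemma eval_R: "w \<in> L \<Longrightarrow> (w, eval w) \<in> R"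
proof (induct w)
  case Nil then show ?case by (simp add: eval_def R_refl)
next
  case (Cons x w)
  then have xV: "x \<in> V \<times> UNIV" and wL: "w \<in> L" by auto
  have 1: "(x # w, x # eval w) \<in> R" using R_cong[OF Cons(1)[OF wL], of "[x]" "[]"] xV by simp
  have "eval w \<in> L" using R_L Cons wL by blast
  then have "(x # eval w, act E x (eval w)) \<in> R" using act_R xV by blast
  with 1 show ?case unfolding eval_def by (simp add: R_trans)
qed

lemma phi_L: "w \<in> L \<Longrightarrow> phi N w \<in> L"
  by (induct w) auto

lemma core:
  assumes N: "0 < N" and w: "w \<in> L" and p: "(phi N w, []) \<in> R"
  shows "(w, []) \<in> R"
proof -
  have "eqv E (eval (phi N w)) (eval [])" using R_eval[OF p] .
  then have "eval (phi N w) = []" by (simp add: eval_def eqv_sym eqv_Nil)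
  then have "eqv E [] (phi N (eval w))" using eval_phi[OF N, of w] by simp
  then have "phi N (eval w) = []" by (rule eqv_Nil)
  then have "eval w = []" using phi_length[of N "eval w"] N by simp
  then show ?thesis using eval_R[OF w] by simp
qed

definition winv :: "('v \<times> bool) list \<Rightarrow> ('v \<times> bool) list" where "winv w = rev (map linv w)"

lemma winv_L: "w \<in> L \<Longrightarrow> winv w \<in> L"
  by (induct w) (auto simp: winv_def linv_def)

lemma winv_R: "w \<in> L \<Longrightarrow> (winv w @ w, []) \<in> R"
proof (induct w)
  case Nil then show ?case by (simp add: winv_def R_refl)
next
  case (Cons x w)
  obtain v b where xv: "x = (v, b)" by (cases x)
  have wL: "w \<in> L" and xV: "x \<in> V \<times> UNIV" using Cons by auto
  have "raag_step E (winv w @ [(v, \<not> b), (v, \<not> \<not> b)] @ w) (winv w @ w)" by (rule raag_step.cancel)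
  then have "raag_step E (winv (x # w) @ x # w) (winv w @ w)" using xv by (simp add: winv_def linv_def)
  moreover have "winv (x # w) @ x # w \<in> L" using winv_L Cons(2) by simp
  moreover have "winv w @ w \<in> L" using winv_L wL by simp
  ultimately have "(winv (x # w) @ x # w, winv w @ w) \<in> R" by (simp add: R_step)
  then show ?case using Cons(1)[OF wL] R_trans by blast
qed

end


lemma fin_index_pow:
  fixes G (structure)
  assumes G: "group G" and H: "subgroup H G" and fin: "finite (rcosets\<^bsub>G\<^esub> H)"
    and g: "g \<in> carrier G"
  shows "\<exists>n::nat. 0 < n \<and> g [^]\<^bsub>G\<^esub> n \<in> H"
proof -
  interpret group G by (rule G)
  let ?f = "\<lambda>k::nat. H #> g [^] k"
  have Hs: "H \<subseteq> carrier G" using H by (rule subgroup.subset)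
  have "range ?f \<subseteq> rcosets H" using rcosetsI[OF Hs] g by blast
  then have "finite (range ?f)" using fin finite_subset by blast
  then have "\<not> inj ?f" using finite_imageD by blast
  then obtain i j where ij: "?f i = ?f j" "i \<noteq> j" unfolding inj_def by blast
  have "\<exists>i j. ?f i = ?f j \<and> i < j"
  proof (cases "i < j")
    case True then show ?thesis using ij by blast
  next
    case False then have "j < i" using ij by simp
    then show ?thesis using ij by metis
  qed
  then obtain i j where ij: "?f i = ?f j" "i < j" by blast
  have "g [^] j \<in> H #> g [^] i" using repr_independenceD[OF H _ ij(1)] g by simp
  then have "g [^] j \<otimes> inv (g [^] i) \<in> H" using subgroup.rcos_module_imp[OF H G] g by simp
  moreover have "g [^] j = g [^] (j - i) \<otimes> g [^] i" using nat_pow_mult[OF g, of "j - i" i] ij(2) by simp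
  ultimately have "g [^] (j - i) \<in> H" using g by (simp add: m_assoc)
  moreover have "0 < j - i" using ij(2) by simp
  ultimately show ?thesis by blast
qed

lemma embed_image:
  assumes A: "group A" and B: "group B" and c: "c \<in> hom A B" and inj: "inj_on c (carrier A)"
  shows "subgroup (c ` carrier A) B \<and> A \<cong> B\<lparr>carrier := c ` carrier A\<rparr>"
proof
  interpret group_hom A B c using A B c by (simp add: group_hom_def group_hom_axioms_def)
  show "subgroup (c ` carrier A) B" by (rule img_is_subgroup)
  have "c \<in> hom A (B\<lparr>carrier := c ` carrier A\<rparr>)" using c unfolding hom_def by auto
  moreover have "bij_betw c (carrier A) (carrier (B\<lparr>carrier := c ` carrier A\<rparr>))"
    using inj by (simp add: bij_betw_def)
  ultimately show "A \<cong> B\<lparr>carrier := c ` carrier A\<rparr>" by (intro is_isoI isoI)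
qed

context sg begin

abbreviation "G \<equiv> raag V E"
definition cls where "cls a = R `` {a}"

lemma cls_carrier: "a \<in> L \<Longrightarrow> cls a \<in> carrier G"
  unfolding cls_def raag_def by (simp add: quotientI)

lemma carrierE: "Z \<in> carrier G \<Longrightarrow> \<exists>a\<in>L. Z = cls a"
  unfolding cls_def raag_def by (auto elim: quotientE)

lemma cls_eq: "a \<in> L \<Longrightarrow> b \<in> L \<Longrightarrow> cls a = cls b \<longleftrightarrow> (a, b) \<in> R"
  unfolding cls_def using eq_equiv_class_iff[OF equivR] by simp

lemma cls_eqI: "(a, b) \<in> R \<Longrightarrow> cls a = cls b"
  using cls_eq R_L by blast

lemma one_G: "\<one>\<^bsub>G\<^esub> = cls []" unfolding raag_def cls_def by simp

lemma mult_cls: assumes "a \<in> L" "b \<in> L" shows "cls a \<otimes>\<^bsub>G\<^esub> cls b = cls (a @ b)"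
proof -
  have k: "R `` {a' @ b'} = cls (a @ b)" if "a' \<in> cls a" "b' \<in> cls b" for a' b'
  proof -
    have "(a, a') \<in> R" "(b, b') \<in> R" using that unfolding cls_def by auto
    then have "(a' @ b', a @ b) \<in> R" using R_app R_sym by blast
    then have "cls (a' @ b') = cls (a @ b)" by (rule cls_eqI)
    then show ?thesis unfolding cls_def .
  qed
  have m: "cls a \<otimes>\<^bsub>G\<^esub> cls b = (\<Union>a'\<in>cls a. \<Union>b'\<in>cls b. R `` {a' @ b'})"
    unfolding raag_def cls_def by simp
  have ne: "a \<in> cls a" "b \<in> cls b" using assms R_refl unfolding cls_def by auto
  have "(\<Union>a'\<in>cls a. \<Union>b'\<in>cls b. R `` {a' @ b'}) = cls (a @ b)"
  proof
    show "(\<Union>a'\<in>cls a. \<Union>b'\<in>cls b. R `` {a' @ b'}) \<subseteq> cls (a @ b)" using k by blast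
    show "cls (a @ b) \<subseteq> (\<Union>a'\<in>cls a. \<Union>b'\<in>cls b. R `` {a' @ b'})" using k[OF ne] ne by blast
  qed
  with m show ?thesis by simp
qed

lemma G_closed: "x \<in> carrier G \<Longrightarrow> y \<in> carrier G \<Longrightarrow> x \<otimes>\<^bsub>G\<^esub> y \<in> carrier G"
proof -
  assume "x \<in> carrier G" "y \<in> carrier G"
  then obtain a b where ab: "a \<in> L" "b \<in> L" "x = cls a" "y = cls b" using carrierE by blast
  then have "x \<otimes>\<^bsub>G\<^esub> y = cls (a @ b)" using mult_cls by simp
  moreover have "a @ b \<in> L" using ab by simp
  ultimately show "x \<otimes>\<^bsub>G\<^esub> y \<in> carrier G" using cls_carrier by simp
qed
lemma G_assoc: "x \<in> carrier G \<Longrightarrow> y \<in> carrier G \<Longrightarrow> z \<in> carrier G \<Longrightarrow> x \<otimes>\<^bsub>G\<^esub> y \<otimes>\<^bsub>G\<^esub> z = x \<otimes>\<^bsub>G\<^esub> (y \<otimes>\<^bsub>G\<^esub> z)"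
proof -
  assume "x \<in> carrier G" "y \<in> carrier G" "z \<in> carrier G"
  then obtain a b c where abc: "a \<in> L" "b \<in> L" "c \<in> L" "x = cls a" "y = cls b" "z = cls c"
    using carrierE by meson
  have ab: "a @ b \<in> L" "b @ c \<in> L" using abc by auto
  have "x \<otimes>\<^bsub>G\<^esub> y \<otimes>\<^bsub>G\<^esub> z = cls ((a @ b) @ c)" using abc mult_cls[OF abc(1,2)] mult_cls[OF ab(1) abc(3)] by simp
  moreover have "x \<otimes>\<^bsub>G\<^esub> (y \<otimes>\<^bsub>G\<^esub> z) = cls (a @ (b @ c))" using abc mult_cls[OF abc(2,3)] mult_cls[OF abc(1) ab(2)] by simp
  ultimately show ?thesis by simp
qed

lemma G_one: "x \<in> carrier G \<Longrightarrow> \<one>\<^bsub>G\<^esub> \<otimes>\<^bsub>G\<^esub> x = x"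
proof -
  assume "x \<in> carrier G"
  then obtain a where "a \<in> L" "x = cls a" using carrierE by blast
  then show "\<one>\<^bsub>G\<^esub> \<otimes>\<^bsub>G\<^esub> x = x" using mult_cls[of "[]" a] by (simp add: one_G)
qed

lemma G_inv: "x \<in> carrier G \<Longrightarrow> \<exists>y\<in>carrier G. y \<otimes>\<^bsub>G\<^esub> x = \<one>\<^bsub>G\<^esub>"
proof -
  assume "x \<in> carrier G"
  then obtain a where a: "a \<in> L" "x = cls a" using carrierE by blast
  have wl: "winv a \<in> L" using winv_L a by simp
  have "cls (winv a) \<otimes>\<^bsub>G\<^esub> x = cls (winv a @ a)" using mult_cls[OF wl a(1)] a by simp
  also have "\<dots> = cls []" using winv_R[OF a(1)] by (rule cls_eqI)
  finally have "cls (winv a) \<otimes>\<^bsub>G\<^esub> x = \<one>\<^bsub>G\<^esub>" by (simp add: one_G)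
  then show "\<exists>y\<in>carrier G. y \<otimes>\<^bsub>G\<^esub> x = \<one>\<^bsub>G\<^esub>" using cls_carrier[OF wl] by blast
qed

lemma group_G: "group G"
proof (rule groupI)
  show "\<one>\<^bsub>G\<^esub> \<in> carrier G" using one_G cls_carrier by simp
qed (fact G_closed G_assoc G_one G_inv)+

lemma eqv_S: "eqv E a b \<Longrightarrow> (a, b) \<in> S\<^sup>*"
proof (induct rule: rtranclp_induct)
  case base then show ?case by simp
next
  case (step y z)
  then have "(y, z) \<in> S" using swp_step by blast
  with step show ?case by (meson rtrancl.rtrancl_into_rtrancl)
qed

lemma rep_cancel_S: "(replicate n x @ replicate n (linv x), []) \<in> S\<^sup>*"
proof (induct n)
  case 0 then show ?case by simp
next
  case (Suc n)
  obtain v b where xv: "x = (v, b)" by (cases x)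
  have "raag_step E (replicate n x @ [(v, b), (v, \<not> b)] @ replicate n (linv x))
     (replicate n x @ replicate n (linv x))" by (rule raag_step.cancel)
  moreover have "replicate (Suc n) x @ replicate (Suc n) (linv x) =
     replicate n x @ [(v, b), (v, \<not> b)] @ replicate n (linv x)"
    by (simp add: xv linv_def replicate_append_same[symmetric])
  ultimately have "(replicate (Suc n) x @ replicate (Suc n) (linv x), replicate n x @ replicate n (linv x)) \<in> S"
    by simp
  then show ?case using Suc by (meson converse_rtrancl_into_rtrancl)
qed

lemma phi_step: "raag_step E a b \<Longrightarrow> (phi N a, phi N b) \<in> S\<^sup>*"
proof (induct rule: raag_step.induct)
  case (cancel xs v b ys)
  have "(phi N xs @ (replicate N (v, b) @ replicate N (linv (v, b))) @ phi N ys, phi N xs @ [] @ phi N ys) \<in> S\<^sup>*"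
    using rep_cancel_S by (intro S_cong)
  then show ?case by (simp add: linv_def)
next
  case (commute u w xs b c ys)
  then have "swp E (xs @ [(u, b), (w, c)] @ ys) (xs @ [(w, c), (u, b)] @ ys)" by (intro swp.intros) simp
  then have "eqv E (phi N (xs @ [(u, b), (w, c)] @ ys)) (phi N (xs @ [(w, c), (u, b)] @ ys))" by (rule phi_swp)
  then show ?case by (rule eqv_S)
qed

lemma phi_S: "(a, b) \<in> S\<^sup>* \<Longrightarrow> (phi N a, phi N b) \<in> S\<^sup>*"
proof (induct rule: rtrancl_induct)
  case base then show ?case by simp
next
  case (step y z)
  then have "(phi N y, phi N z) \<in> S\<^sup>*" using phi_step S_sym by blast
  with step show ?case by (meson rtrancl_trans)
qed

lemma phi_R: "(a, b) \<in> R \<Longrightarrow> (phi N a, phi N b) \<in> R"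
  by (simp add: R_def2 phi_S phi_L)

end


context sg begin

definition Phi where "Phi N Xs = (\<Union>a\<in>Xs. cls (phi N a))"

lemma Phi_cls: assumes a: "a \<in> L" shows "Phi N (cls a) = cls (phi N a)"
proof -
  have k: "cls (phi N a') = cls (phi N a)" if "a' \<in> cls a" for a'
  proof -
    have "(a, a') \<in> R" using that unfolding cls_def by simp
    then have "(a', a) \<in> R" by (rule R_sym)
    then have "(phi N a', phi N a) \<in> R" by (rule phi_R)
    then show ?thesis by (rule cls_eqI)
  qed
  have aa: "a \<in> cls a" using R_refl[OF a] unfolding cls_def by simp
  show ?thesis unfolding Phi_def
  proof
    show "(\<Union>a'\<in>cls a. cls (phi N a')) \<subseteq> cls (phi N a)" using k by blast
    show "cls (phi N a) \<subseteq> (\<Union>a'\<in>cls a. cls (phi N a'))" using aa by blast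
  qed
qed

lemma Phi_hom: "Phi N \<in> hom G G"
proof (rule homI)
  fix x assume "x \<in> carrier G"
  then obtain a where a: "a \<in> L" "x = cls a" using carrierE by blast
  have "Phi N x = cls (phi N a)" using Phi_cls[OF a(1)] a(2) by simp
  then show "Phi N x \<in> carrier G" using cls_carrier[OF phi_L[OF a(1)]] by simp
next
  fix x y assume "x \<in> carrier G" "y \<in> carrier G"
  then obtain a b where ab: "a \<in> L" "b \<in> L" "x = cls a" "y = cls b" using carrierE by blast
  have abL: "a @ b \<in> L" using ab by simp
  have "Phi N (x \<otimes>\<^bsub>G\<^esub> y) = Phi N (cls (a @ b))" using ab mult_cls[OF ab(1,2)] by simp
  also have "\<dots> = cls (phi N a @ phi N b)" using Phi_cls[OF abL] by simp
  also have "\<dots> = cls (phi N a) \<otimes>\<^bsub>G\<^esub> cls (phi N b)" using mult_cls[OF phi_L[OF ab(1)] phi_L[OF ab(2)]] by simp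
  also have "\<dots> = Phi N x \<otimes>\<^bsub>G\<^esub> Phi N y" using Phi_cls[OF ab(1)] Phi_cls[OF ab(2)] ab by simp
  finally show "Phi N (x \<otimes>\<^bsub>G\<^esub> y) = Phi N x \<otimes>\<^bsub>G\<^esub> Phi N y" .
qed

lemma winv_winv[simp]: "winv (winv w) = w"
  by (simp add: winv_def rev_map comp_def)

lemma Phi_inj: assumes N: "0 < N" shows "inj_on (Phi N) (carrier G)"
proof (rule inj_onI)
  fix x y assume "x \<in> carrier G" "y \<in> carrier G" and eq: "Phi N x = Phi N y"
  then obtain a b where ab: "a \<in> L" "b \<in> L" "x = cls a" "y = cls b" using carrierE by blast
  have wb: "winv b \<in> L" using winv_L ab by simp
  have "cls (phi N a) = cls (phi N b)" using eq ab Phi_cls[OF ab(1)] Phi_cls[OF ab(2)] by simp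
  then have pab: "(phi N a, phi N b) \<in> R" using cls_eq[OF phi_L[OF ab(1)] phi_L[OF ab(2)]] by simp
  have 1: "(phi N a @ phi N (winv b), phi N b @ phi N (winv b)) \<in> R"
    using R_app[OF pab R_refl[OF phi_L[OF wb]]] .
  have "(winv (winv b) @ winv b, []) \<in> R" using winv_R[OF wb] .
  then have "(b @ winv b, []) \<in> R" by simp
  then have "(phi N (b @ winv b), phi N []) \<in> R" by (rule phi_R)
  then have "(phi N b @ phi N (winv b), []) \<in> R" by simp
  with 1 have "(phi N a @ phi N (winv b), []) \<in> R" by (rule R_trans)
  then have "(phi N (a @ winv b), []) \<in> R" by simp
  then have 2: "(a @ winv b, []) \<in> R" using core[OF N] ab wb by simp
  have "(a @ (winv b @ b), a @ []) \<in> R" using R_app[OF R_refl[OF ab(1)] winv_R[OF ab(2)]] .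
  then have "(a @ [], a @ (winv b @ b)) \<in> R" by (rule R_sym)
  then have 3: "(a, (a @ winv b) @ b) \<in> R" by simp
  have "((a @ winv b) @ b, [] @ b) \<in> R" using R_app[OF 2 R_refl[OF ab(2)]] .
  then have "((a @ winv b) @ b, b) \<in> R" by simp
  with 3 have "(a, b) \<in> R" by (rule R_trans)
  then have "cls a = cls b" by (rule cls_eqI)
  then show "x = y" using ab by simp
qed

lemma cls_rep: assumes x: "x \<in> V \<times> UNIV" shows "cls (replicate n x) = cls [x] [^]\<^bsub>G\<^esub> n"
proof (induct n)
  case 0 then show ?case by (simp add: one_G)
next
  case (Suc n)
  have "cls (replicate (Suc n) x) = cls (replicate n x @ [x])" by (simp add: replicate_append_same)
  also have "\<dots> = cls (replicate n x) \<otimes>\<^bsub>G\<^esub> cls [x]"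
    using mult_cls[of "replicate n x" "[x]"] x by (simp add: in_lists_conv_set)
  finally show ?case using Suc by simp
qed

lemma embed:
  assumes H: "subgroup H G" and fin: "finite (rcosets\<^bsub>G\<^esub> H)"
  shows "\<exists>h. h \<in> hom G (G\<lparr>carrier := H\<rparr>) \<and> inj_on h (carrier G)"
proof -
  interpret group G by (rule group_G)
  have fV: "finite V" using sg unfolding simplicial_graph_def by simp
  let ?g = "\<lambda>v. cls [(v, True)]"
  have gc: "?g v \<in> carrier G" if "v \<in> V" for v using that cls_carrier by simp
  have "\<forall>v\<in>V. \<exists>n::nat. 0 < n \<and> ?g v [^]\<^bsub>G\<^esub> n \<in> H"
    using fin_index_pow[OF group_G H fin gc] by blast
  then obtain n where n: "\<forall>v\<in>V. 0 < n v \<and> ?g v [^]\<^bsub>G\<^esub> (n v :: nat) \<in> H"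
    by (rule bchoice[elim_format]) blast
  define N where "N = (\<Prod>v\<in>V. n v)"
  have N: "0 < N" unfolding N_def using n by (simp add: prod_pos)
  have gN: "?g v [^]\<^bsub>G\<^esub> N \<in> H" if v: "v \<in> V" for v
  proof -
    have "N = n v * (\<Prod>u\<in>V - {v}. n u)" unfolding N_def using fV v by (simp add: prod.remove)
    then have "?g v [^]\<^bsub>G\<^esub> N = (?g v [^]\<^bsub>G\<^esub> n v) [^]\<^bsub>G\<^esub> (\<Prod>u\<in>V - {v}. n u)"
      using nat_pow_pow gc v by simp
    moreover have "(?g v [^]\<^bsub>G\<^esub> n v) [^]\<^bsub>G\<^esub> (k::nat) \<in> H" for k
    proof (induct k)
      case 0 then show ?case using subgroup.one_closed[OF H] by simp
    next
      case (Suc k) then show ?case using subgroup.m_closed[OF H] n v by simp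
    qed
    ultimately show ?thesis by simp
  qed
  have repH: "cls (replicate N x) \<in> H" if x: "x \<in> V \<times> UNIV" for x
  proof -
    obtain v b where xv: "x = (v, b)" by (cases x)
    have v: "v \<in> V" using x xv by simp
    have tH: "cls (replicate N (v, True)) \<in> H" using gN[OF v] cls_rep[of "(v, True)" N] v by simp
    show ?thesis
    proof (cases b)
      case True then show ?thesis using tH xv by simp
    next
      case False
      let ?y = "(v, True)"
      have L1: "replicate N (linv ?y) @ replicate N (linv (linv ?y)) \<in> L" using v by (auto simp: linv_def)
      have "(replicate N (linv ?y) @ replicate N (linv (linv ?y)), []) \<in> R"
        using rep_cancel_S[of N "linv ?y"] L1 by (simp add: R_def2)
      then have "cls (replicate N (linv ?y) @ replicate N ?y) = \<one>\<^bsub>G\<^esub>" using cls_eqI one_G by simp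
      then have "cls (replicate N (linv ?y)) \<otimes>\<^bsub>G\<^esub> cls (replicate N ?y) = \<one>\<^bsub>G\<^esub>"
        using mult_cls[of "replicate N (v, False)" "replicate N (v, True)"] v by (simp add: linv_def in_lists_conv_set)
      then have "inv\<^bsub>G\<^esub> cls (replicate N ?y) = cls (replicate N (linv ?y))"
        using v by (intro inv_equality) (auto intro!: cls_carrier simp: linv_def)
      moreover have "inv\<^bsub>G\<^esub> cls (replicate N ?y) \<in> H" using tH subgroup.m_inv_closed[OF H] by simp
      ultimately show ?thesis using xv False by (simp add: linv_def)
    qed
  qed
  have phiH: "cls (phi N w) \<in> H" if "w \<in> L" for w
    using that
  proof (induct w)
    case Nil then show ?case using subgroup.one_closed[OF H] one_G by simp
  next
    case (Cons x w)
    then have "cls (phi N (x # w)) = cls (replicate N x) \<otimes>\<^bsub>G\<^esub> cls (phi N w)"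
      using mult_cls[of "replicate N x" "phi N w"] phi_L[of w N] by (simp add: in_lists_conv_set)
    then show ?case using Cons repH subgroup.m_closed[OF H] by simp
  qed
  have "Phi N \<in> hom G (G\<lparr>carrier := H\<rparr>)"
  proof (rule homI)
    fix x assume "x \<in> carrier G"
    then obtain a where "a \<in> L" "x = cls a" using carrierE by blast
    then show "Phi N x \<in> carrier (G\<lparr>carrier := H\<rparr>)" using Phi_cls phiH by simp
  next
    fix x y assume "x \<in> carrier G" "y \<in> carrier G"
    then show "Phi N (x \<otimes>\<^bsub>G\<^esub> y) = Phi N x \<otimes>\<^bsub>G\<lparr>carrier := H\<rparr>\<^esub> Phi N y"
      using Phi_hom unfolding hom_def by simp
  qed
  then show ?thesis using Phi_inj[OF N] by blast
qed

end


lemma compose_embed: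
  assumes A: "group A" and B: "group B" and h: "h \<in> hom A C" and hi: "inj_on h (carrier A)"
    and g: "g \<in> hom C (B\<lparr>carrier := K\<rparr>)" and gi: "inj_on g (carrier C)" and K: "K \<subseteq> carrier B"
  shows "\<exists>K'. subgroup K' B \<and> A \<cong> B\<lparr>carrier := K'\<rparr>"
proof -
  have c: "g \<circ> h \<in> hom A (B\<lparr>carrier := K\<rparr>)" using h g by (rule hom_compose)
  have c2: "g \<circ> h \<in> hom A B" using c K unfolding hom_def by auto
  have hc: "h ` carrier A \<subseteq> carrier C" using h by (rule hom_carrier)
  have "inj_on (g \<circ> h) (carrier A)" using hi inj_on_subset[OF gi hc] by (rule comp_inj_on)
  then show ?thesis using embed_image[OF A B c2] by blast
qed

theorem mainTheorem12:
  fixes V :: "'v set" and E :: "'v \<Rightarrow> 'v \<Rightarrow> bool"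
    and W :: "'w set" and F :: "'w \<Rightarrow> 'w \<Rightarrow> bool"
  assumes "simplicial_graph V E" and "simplicial_graph W F"
    and "commensurable (raag V E) (raag W F)"
  shows "(\<exists>K. subgroup K (raag V E) \<and> raag W F \<cong> (raag V E)\<lparr>carrier := K\<rparr>) \<and>
         (\<exists>K. subgroup K (raag W F) \<and> raag V E \<cong> (raag W F)\<lparr>carrier := K\<rparr>)"
proof -
  interpret SV: sg V E by unfold_locales (rule assms(1))
  interpret SW: sg W F by unfold_locales (rule assms(2))
  obtain H H' where H: "subgroup H (raag V E)" "finite (rcosets\<^bsub>raag V E\<^esub> H)"
    and H': "subgroup H' (raag W F)" "finite (rcosets\<^bsub>raag W F\<^esub> H')"
    and iso: "raag V E\<lparr>carrier := H\<rparr> \<cong> raag W F\<lparr>carrier := H'\<rparr>"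
    using assms(3) unfolding commensurable_def by blast
  obtain f where f: "f \<in> iso (raag V E\<lparr>carrier := H\<rparr>) (raag W F\<lparr>carrier := H'\<rparr>)"
    using iso unfolding is_iso_def by blast
  have GV: "group (raag V E)" by (rule SV.group_G)
  have GW: "group (raag W F)" by (rule SW.group_G)
  have GH: "group (raag V E\<lparr>carrier := H\<rparr>)" using subgroup.subgroup_is_group[OF H(1) GV] .
  have GH': "group (raag W F\<lparr>carrier := H'\<rparr>)" using subgroup.subgroup_is_group[OF H'(1) GW] .
  have fi: "inj_on f H" and fh: "f \<in> hom (raag V E\<lparr>carrier := H\<rparr>) (raag W F\<lparr>carrier := H'\<rparr>)"
    using f unfolding iso_def bij_betw_def by auto
  have g: "inv_into H f \<in> iso (raag W F\<lparr>carrier := H'\<rparr>) (raag V E\<lparr>carrier := H\<rparr>)"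
    using group.iso_set_sym[OF GH f] by simp
  have gi: "inj_on (inv_into H f) H'" and gh: "inv_into H f \<in> hom (raag W F\<lparr>carrier := H'\<rparr>) (raag V E\<lparr>carrier := H\<rparr>)"
    using g unfolding iso_def bij_betw_def by auto
  obtain h where h: "h \<in> hom (raag W F) (raag W F\<lparr>carrier := H'\<rparr>)" "inj_on h (carrier (raag W F))"
    using SW.embed[OF H'] by blast
  obtain k where k: "k \<in> hom (raag V E) (raag V E\<lparr>carrier := H\<rparr>)" "inj_on k (carrier (raag V E))"
    using SV.embed[OF H] by blast
  have 1: "\<exists>K. subgroup K (raag V E) \<and> raag W F \<cong> (raag V E)\<lparr>carrier := K\<rparr>"
    using compose_embed[OF GW GV h(1) h(2) gh] gi subgroup.subset[OF H(1)] by simp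
  have 2: "\<exists>K. subgroup K (raag W F) \<and> raag V E \<cong> (raag W F)\<lparr>carrier := K\<rparr>"
    using compose_embed[OF GV GW k(1) k(2) fh] fi subgroup.subset[OF H'(1)] by simp
  from 1 2 show ?thesis ..
qed


end
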